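(* Let $(\mathfrak{h},[\cdot,\cdot])$ be a finite-dimensional real left Leibniz algebra with center $Z(\mathfrak{h})=\{a\in\mathfrak{h}:[a,\mathfrak{h}]=[\mathfrak{h},a]=0\}$ and derived subspace $[\mathfrak{h},\mathfrak{h}]$ (the span of all brackets). Choose a scalar product $\langle\cdot,\cdot\rangle$ on $\mathfrak{h}$, vectors $a_1,b_1,\ldots,a_k,b_k\in[\mathfrak{h},\mathfrak{h}]^\perp\cap Z(\mathfrak{h})^\perp$, vectors $z_1,\ldots,z_k\in Z(\mathfrak{h})$, and smooth functions $f_1,\ldots,f_k:\mathbb{R}\to\mathbb{R}$ with $f_j(0)=0$ for all $j$. Then \[x\rhd y=\exp(\mathrm{ad}_x)(y)+\sum_{j=1}^k\langle y,b_j\rangle f_j(\langle x,a_j\rangle)z_j\] is a linear Lie rack operation on $\mathfrak{h}$ pointed at $0$. Moreover, if $f_j'(0)=0$ for $j=1,\ldots,k$, then $[\cdot,\cdot]_{\rhd}=[\cdot,\cdot]$.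
   Context: A left Leibniz algebra is a vector space with bilinear bracket satisfying $[u,[v,w]]=[[u,v],w]+[v,[u,w]]$; $\mathrm{ad}_x(y)=[x,y]$. A rack is a set with $\rhd$ such that each $\mathrm{L}_a:b\mapsto a\rhd b$ is bijective and $a\rhd(b\rhd c)=(a\rhd b)\rhd(a\rhd c)$; it is pointed at $e$ if $a\rhd e=e$ for all $a$ and $\mathrm{L}_e=\mathrm{Id}$. A Lie rack requires a smooth manifold, $\rhd$ smooth and the $\mathrm{L}_a$ diffeomorphisms. A linear Lie rack operation on a vector space is a Lie rack operation pointed at $0$ with every $\mathrm{L}_x$ linear. Its associated bracket is $[u,v]_{\rhd}=\frac{d}{dt}\big|_{t=0}\mathrm{L}_{c(t)}(v)$ for a smooth curve $c$ with $c(0)=0$, $c'(0)=u$. *)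

theory Defs
  imports "HOL-Analysis.Analysis"
begin

definition left_leibniz :: "('a::real_vector \<Rightarrow> 'a \<Rightarrow> 'a) \<Rightarrow> bool" where
  "left_leibniz br \<longleftrightarrow> bilinear br \<and>
     (\<forall>u v w. br u (br v w) = br (br u v) w + br v (br u w))"

definition center :: "('a::real_vector \<Rightarrow> 'a \<Rightarrow> 'a) \<Rightarrow> 'a set" where
  "center br = {a. \<forall>h. br a h = 0 \<and> br h a = 0}"

definition derived :: "('a::real_vector \<Rightarrow> 'a \<Rightarrow> 'a) \<Rightarrow> 'a set" where
  "derived br = span {br u v | u v. True}"

definition scalar_product :: "('a::real_vector \<Rightarrow> 'a \<Rightarrow> real) \<Rightarrow> bool" where
  "scalar_product sp \<longleftrightarrow> bilinear sp \<and> (\<forall>x y. sp x y = sp y x) \<and>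
     (\<forall>x. x \<noteq> 0 \<longrightarrow> sp x x > 0)"

definition orth :: "('a \<Rightarrow> 'a \<Rightarrow> real) \<Rightarrow> 'a set \<Rightarrow> 'a set" where
  "orth sp S = {x. \<forall>y\<in>S. sp x y = 0}"

definition exp_ad :: "('a::real_normed_vector \<Rightarrow> 'a \<Rightarrow> 'a) \<Rightarrow> 'a \<Rightarrow> 'a \<Rightarrow> 'a" where
  "exp_ad br x y = (\<Sum>n. (1 / fact n) *\<^sub>R ((br x ^^ n) y))"

text \<open>Smooth (C-infinity) maps between normed spaces: Frechet derivatives of all orders
  exist everywhere; D vs x is the iterated derivative of f at x in directions vs.\<close>
definition smooth :: "('a::real_normed_vector \<Rightarrow> 'b::real_normed_vector) \<Rightarrow> bool" where
  "smooth f \<longleftrightarrow> (\<exists>D :: 'a list \<Rightarrow> 'a \<Rightarrow> 'b. (\<forall>x. D [] x = f x) \<and>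
     (\<forall>vs x. (D vs has_derivative (\<lambda>v. D (v # vs) x)) (at x)))"

definition rack :: "('a \<Rightarrow> 'a \<Rightarrow> 'a) \<Rightarrow> bool" where
  "rack op \<longleftrightarrow> (\<forall>a. bij (op a)) \<and> (\<forall>a b c. op a (op b c) = op (op a b) (op a c))"

definition pointed_at :: "('a \<Rightarrow> 'a \<Rightarrow> 'a) \<Rightarrow> 'a \<Rightarrow> bool" where
  "pointed_at op e \<longleftrightarrow> (\<forall>a. op a e = e) \<and> op e = id"

definition lie_rack :: "('a::real_normed_vector \<Rightarrow> 'a \<Rightarrow> 'a) \<Rightarrow> bool" where
  "lie_rack op \<longleftrightarrow> rack op \<and> smooth (\<lambda>p::'a \<times> 'a. op (fst p) (snd p)) \<and>
     (\<forall>a. smooth (op a) \<and> smooth (inv (op a)))"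

definition linear_lie_rack :: "('a::real_normed_vector \<Rightarrow> 'a \<Rightarrow> 'a) \<Rightarrow> bool" where
  "linear_lie_rack op \<longleftrightarrow> lie_rack op \<and> pointed_at op 0 \<and> (\<forall>x. linear (op x))"

definition is_rack_bracket :: "('a::real_normed_vector \<Rightarrow> 'a \<Rightarrow> 'a) \<Rightarrow> ('a \<Rightarrow> 'a \<Rightarrow> 'a) \<Rightarrow> bool" where
  "is_rack_bracket op br \<longleftrightarrow> (\<forall>u v (c::real \<Rightarrow> 'a). smooth c \<and> c 0 = 0 \<and>
     (c has_vector_derivative u) (at 0) \<longrightarrow>
     ((\<lambda>t. op (c t) v) has_vector_derivative br u v) (at 0))"

end

theory Submission
  imports Defs
begin


definition wit :: "('a::real_normed_vector list \<Rightarrow> 'a \<Rightarrow> 'b::real_normed_vector) \<Rightarrow> bool" where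
  "wit D \<longleftrightarrow> (\<forall>vs x. (D vs has_derivative (\<lambda>v. D (v # vs) x)) (at x))"

lemma smoothI: "wit D \<Longrightarrow> (\<And>x. D [] x = f x) \<Longrightarrow> smooth f"
  unfolding smooth_def wit_def by blast

lemma smoothE: "smooth f \<Longrightarrow> (\<And>D. wit D \<Longrightarrow> (\<And>x. D [] x = f x) \<Longrightarrow> P) \<Longrightarrow> P"
  unfolding smooth_def wit_def by blast

definition linD :: "('a \<Rightarrow> 'b::real_normed_vector) \<Rightarrow> 'a list \<Rightarrow> 'a \<Rightarrow> 'b" where
  "linD l vs x = (case vs of [] \<Rightarrow> l x | [v] \<Rightarrow> l v | _ \<Rightarrow> 0)"

lemma linD_Nil[simp]: "linD l [] = l" by (rule ext) (simp add: linD_def)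
lemma linD_one[simp]: "linD l [v] = (\<lambda>x. l v)" by (rule ext) (simp add: linD_def)
lemma linD_two[simp]: "linD l (v # w # ws) = (\<lambda>x. 0)" by (rule ext) (simp add: linD_def)

lemma wit_lin: assumes "bounded_linear l" shows "wit (linD l)"
  unfolding wit_def
proof (intro allI)
  fix vs :: "'a list" and x
  show "(linD l vs has_derivative (\<lambda>v. linD l (v # vs) x)) (at x)"
  proof (cases vs)
    case Nil
    then show ?thesis using assms
      by (simp add: bounded_linear_imp_has_derivative)
  next
    case (Cons w ws)
    then show ?thesis by (cases ws) simp_all
  qed
qed

lemma smooth_lin: "bounded_linear l \<Longrightarrow> smooth l"
  by (rule smoothI[OF wit_lin]) simp_all

lemma wit_outer: assumes "wit D" "bounded_linear g" shows "wit (\<lambda>vs x. g (D vs x))"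
  using assms bounded_linear.has_derivative unfolding wit_def by blast

lemma wit_inner: assumes "wit D" "bounded_linear l" shows "wit (\<lambda>vs x. D (map l vs) (l x))"
  unfolding wit_def
proof (intro allI)
  fix vs x
  have "(l has_derivative l) (at x)" using assms(2) by (rule bounded_linear_imp_has_derivative)
  moreover have "(D (map l vs) has_derivative (\<lambda>v. D (v # map l vs) (l x))) (at (l x))"
    using assms(1) unfolding wit_def by blast
  ultimately have "((D (map l vs) \<circ> l) has_derivative ((\<lambda>v. D (v # map l vs) (l x)) \<circ> l)) (at x)"
    by (rule diff_chain_at)
  then show "((\<lambda>x. D (map l vs) (l x)) has_derivative (\<lambda>v. D (map l (v # vs)) (l x))) (at x)"
    by (simp add: o_def)
qed

lemma wit_add: assumes "wit D1" "wit D2" shows "wit (\<lambda>vs x. D1 vs x + D2 vs x)"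
  using assms unfolding wit_def by (auto intro!: has_derivative_add)

lemma wit_sum: assumes "\<And>i. i \<in> I \<Longrightarrow> wit (D i)" shows "wit (\<lambda>vs x. \<Sum>i\<in>I. D i vs x)"
  using assms unfolding wit_def by (auto intro!: has_derivative_sum)

fun LB :: "('b \<Rightarrow> 'c \<Rightarrow> 'd::real_normed_vector) \<Rightarrow> ('a list \<Rightarrow> 'a \<Rightarrow> 'b) \<Rightarrow> ('a list \<Rightarrow> 'a \<Rightarrow> 'c)
   \<Rightarrow> 'a list \<Rightarrow> 'a \<Rightarrow> 'd" where
  "LB pr Df Dg [] x = pr (Df [] x) (Dg [] x)"
| "LB pr Df Dg (w # rs) x = LB pr (\<lambda>us. Df (us @ [w])) Dg rs x + LB pr Df (\<lambda>us. Dg (us @ [w])) rs x"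

lemma wit_app: "wit D \<Longrightarrow> wit (\<lambda>us. D (us @ [w]))"
  unfolding wit_def by simp

lemma LB_deriv:
  assumes "bounded_bilinear pr" "wit Df" "wit Dg"
  shows "(LB pr Df Dg rs has_derivative (\<lambda>v. LB pr Df Dg (rs @ [v]) x)) (at x)"
  using assms(2,3)
proof (induction rs arbitrary: Df Dg)
  case Nil
  have f: "(Df [] has_derivative (\<lambda>v. Df [v] x)) (at x)" and g: "(Dg [] has_derivative (\<lambda>v. Dg [v] x)) (at x)"
    using Nil unfolding wit_def by blast+
  have "((\<lambda>x. pr (Df [] x) (Dg [] x)) has_derivative (\<lambda>h. pr (Df [] x) (Dg [h] x) + pr (Df [h] x) (Dg [] x))) (at x)"
    by (rule bounded_bilinear.FDERIV[OF assms(1) f g])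
  then show ?case by (simp add: add.commute)
next
  case (Cons w rs)
  have "(LB pr (\<lambda>us. Df (us @ [w])) Dg rs has_derivative (\<lambda>v. LB pr (\<lambda>us. Df (us @ [w])) Dg (rs @ [v]) x)) (at x)"
    by (rule Cons.IH[OF wit_app[OF Cons.prems(1)] Cons.prems(2)])
  moreover have "(LB pr Df (\<lambda>us. Dg (us @ [w])) rs has_derivative (\<lambda>v. LB pr Df (\<lambda>us. Dg (us @ [w])) (rs @ [v]) x)) (at x)"
    by (rule Cons.IH[OF Cons.prems(1) wit_app[OF Cons.prems(2)]])
  ultimately show ?case by (simp add: has_derivative_add)
qed

lemma wit_LB:
  assumes "bounded_bilinear pr" "wit Df" "wit Dg"
  shows "wit (\<lambda>vs. LB pr Df Dg (rev vs))"
  unfolding wit_def using LB_deriv[OF assms] by simp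

lemma LB_bound:
  assumes K: "0 \<le> K" "\<And>a b. norm (pr a b) \<le> norm a * norm b * K"
    and "\<And>us. norm (Df us x) \<le> A * s ^ length us * prod_list (map norm us)"
    and "\<And>us. norm (Dg us x) \<le> C * t ^ length us * prod_list (map norm us)"
  shows "norm (LB pr Df Dg rs x) \<le> K * A * C * (s + t) ^ length rs * prod_list (map norm rs)"
  using assms(3,4)
proof (induction rs arbitrary: Df Dg A C)
  case Nil
  have a: "norm (Df [] x) \<le> A" and b: "norm (Dg [] x) \<le> C" using Nil[of "[]"] by simp_all
  have "norm (pr (Df [] x) (Dg [] x)) \<le> norm (Df [] x) * norm (Dg [] x) * K" by (rule K)
  also have "\<dots> \<le> A * C * K"
    using order_trans[OF norm_ge_zero a] by (intro mult_right_mono mult_mono a b K) auto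
  finally show ?case by (simp add: ac_simps)
next
  case (Cons w rs)
  have h1: "norm (LB pr (\<lambda>us. Df (us @ [w])) Dg rs x) \<le> K * (A * s * norm w) * C * (s + t) ^ length rs * prod_list (map norm rs)"
  proof (rule Cons.IH)
    fix us show "norm (Df (us @ [w]) x) \<le> A * s * norm w * s ^ length us * prod_list (map norm us)"
      using Cons.prems(1)[of "us @ [w]"] by (simp add: ac_simps)
  qed (rule Cons.prems(2))
  have h2: "norm (LB pr Df (\<lambda>us. Dg (us @ [w])) rs x) \<le> K * A * (C * t * norm w) * (s + t) ^ length rs * prod_list (map norm rs)"
  proof (rule Cons.IH)
    fix us show "norm (Dg (us @ [w]) x) \<le> C * t * norm w * t ^ length us * prod_list (map norm us)"
      using Cons.prems(2)[of "us @ [w]"] by (simp add: ac_simps)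
  qed (rule Cons.prems(1))
  have "norm (LB pr Df Dg (w # rs) x) \<le> norm (LB pr (\<lambda>us. Df (us @ [w])) Dg rs x) + norm (LB pr Df (\<lambda>us. Dg (us @ [w])) rs x)"
    by (simp add: norm_triangle_ineq)
  also have "\<dots> \<le> K * (A * s * norm w) * C * (s + t) ^ length rs * prod_list (map norm rs) + K * A * (C * t * norm w) * (s + t) ^ length rs * prod_list (map norm rs)"
    using h1 h2 by simp
  also have "\<dots> = K * A * C * (s + t) ^ length (w # rs) * prod_list (map norm (w # rs))"
    by (simp add: algebra_simps)
  finally show ?case .
qed



lemma wit_series:
  fixes D :: "nat \<Rightarrow> 'a::real_normed_vector list \<Rightarrow> 'a \<Rightarrow> 'b::banach"
  assumes wD: "\<And>n. wit (D n)"
    and bnd: "\<And>R m. \<exists>M. summable M \<and> (\<forall>n. 0 \<le> M n) \<and>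
      (\<forall>n x us. norm x \<le> R \<longrightarrow> length us = m \<longrightarrow> norm (D n us x) \<le> M n * prod_list (map norm us))"
  shows "wit (\<lambda>vs x. \<Sum>n. D n vs x)"
  unfolding wit_def
proof (intro allI)
  fix vs :: "'a list" and x :: 'a
  define R where "R = norm x + 1"
  define S where "S = ball (0::'a) R"
  define P where "P = prod_list (map norm vs)"
  have P0: "0 \<le> P" unfolding P_def by (rule prod_list_nonneg) auto
  have xS: "x \<in> S" unfolding S_def R_def by simp
  have RS: "norm y \<le> R" if "y \<in> S" for y using that unfolding S_def by simp
  obtain M0 where M0: "summable M0" "\<forall>n. 0 \<le> M0 n"
     "\<forall>n x us. norm x \<le> R \<longrightarrow> length us = length vs \<longrightarrow> norm (D n us x) \<le> M0 n * prod_list (map norm us)"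
    using bnd by blast
  obtain M1 where M1: "summable M1" "\<forall>n. 0 \<le> M1 n"
     "\<forall>n x us. norm x \<le> R \<longrightarrow> length us = Suc (length vs) \<longrightarrow> norm (D n us x) \<le> M1 n * prod_list (map norm us)"
    using bnd by blast
  have b1: "norm (D n (h # vs) y) \<le> M1 n * (norm h * P)" if "y \<in> S" for n h y
    using spec[OF spec[OF spec[OF M1(3), of n], of y], of "h # vs"] RS[OF that] unfolding P_def by simp
  have s1: "summable (\<lambda>n. D n (h # vs) y)" if "y \<in> S" for h y
    by (rule summable_comparison_test'[where N=0, OF summable_mult2[OF M1(1)]]) (use b1[OF that] in blast)
  have sx: "summable (\<lambda>n. D n vs x)"
    by (rule summable_comparison_test'[where N=0, OF summable_mult2[OF M0(1), of P]])
       (use M0(3) RS[OF xS] in \<open>auto simp: P_def\<close>)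
  have "\<exists>g. \<forall>y\<in>S. (\<lambda>n. D n vs y) sums (g y) \<and>
       (g has_derivative (\<lambda>h. \<Sum>n. D n (h # vs) y)) (at y within S)"
  proof (rule has_derivative_series[where f'="\<lambda>n y h. D n (h # vs) y"])
    show "convex S" unfolding S_def by simp
    show "(D n vs has_derivative (\<lambda>h. D n (h # vs) y)) (at y within S)" if "y \<in> S" for n y
      using wD[of n] unfolding wit_def by (blast intro: has_derivative_at_withinI)
    show "x \<in> S" by (rule xS)
    show "(\<lambda>n. D n vs x) sums (\<Sum>n. D n vs x)" using sx by (rule summable_sums)
    show "\<forall>\<^sub>F n in sequentially. \<forall>y\<in>S. \<forall>h. norm ((\<Sum>i<n. D i (h # vs) y) - (\<Sum>n. D n (h # vs) y)) \<le> e * norm h"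
      if e: "e > 0" for e
    proof -
      have "(\<lambda>n. \<Sum>i<n. M1 i) \<longlonglongrightarrow> suminf M1" by (rule summable_LIMSEQ[OF M1(1)])
      moreover have "e / (P + 1) > 0" using e P0 by simp
      ultimately have "\<forall>\<^sub>F n in sequentially. dist (\<Sum>i<n. M1 i) (suminf M1) < e / (P + 1)"
        by (rule tendstoD)
      then show ?thesis
      proof (rule eventually_mono, intro ballI allI)
        fix n y h assume n: "dist (\<Sum>i<n. M1 i) (suminf M1) < e / (P + 1)" and y: "y \<in> S"
        have tailM: "suminf M1 - (\<Sum>i<n. M1 i) = (\<Sum>i. M1 (i + n))"
          using suminf_split_initial_segment[OF M1(1), of n] by simp
        have sM: "summable (\<lambda>i. M1 (i + n))" using M1(1) by (rule summable_ignore_initial_segment)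
        have tailD: "(\<Sum>i<n. D i (h # vs) y) - (\<Sum>n. D n (h # vs) y) = - (\<Sum>i. D (i + n) (h # vs) y)"
          using suminf_split_initial_segment[OF s1[OF y, of h], of n] by simp
        have "norm (\<Sum>i. D (i + n) (h # vs) y) \<le> (\<Sum>i. M1 (i + n) * (norm h * P))"
          by (rule norm_suminf_le) (use b1[OF y] summable_mult2[OF sM] in auto)
        also have "\<dots> = (suminf M1 - (\<Sum>i<n. M1 i)) * (norm h * P)"
          using suminf_mult2[OF sM] tailM by simp
        also have "\<dots> \<le> e / (P + 1) * (norm h * P)"
          using n by (intro mult_right_mono) (auto simp: dist_real_def P0)
        also have "\<dots> \<le> e * norm h"
        proof -
          have "e / (P + 1) * P \<le> e" using e P0 by (simp add: field_simps)
          then have "e / (P + 1) * P * norm h \<le> e * norm h" by (intro mult_right_mono) auto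
          then show ?thesis by (simp add: ac_simps)
        qed
        finally show "norm ((\<Sum>i<n. D i (h # vs) y) - (\<Sum>n. D n (h # vs) y)) \<le> e * norm h"
          by (simp add: tailD)
      qed
    qed
  qed
  then obtain g where g: "\<forall>y\<in>S. (\<lambda>n. D n vs y) sums (g y) \<and>
       (g has_derivative (\<lambda>h. \<Sum>n. D n (h # vs) y)) (at y within S)" by blast
  have "(g has_derivative (\<lambda>h. \<Sum>n. D n (h # vs) x)) (at x)"
    using g xS at_within_open[OF xS] unfolding S_def by (metis open_ball)
  then show "((\<lambda>x. \<Sum>n. D n vs x) has_derivative (\<lambda>v. \<Sum>n. D n (v # vs) x)) (at x)"
  proof (rule has_derivative_transform_within_open)
    show "open S" "x \<in> S" using xS unfolding S_def by auto
    show "g y = (\<Sum>n. D n vs y)" if "y \<in> S" for y using g that sums_unique by metis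
  qed
qed



fun Gs :: "('a \<Rightarrow> 'a \<Rightarrow> 'a) \<Rightarrow> nat \<Rightarrow> 'a \<times> 'a \<Rightarrow> 'a" where
  "Gs br 0 p = snd p"
| "Gs br (Suc n) p = br (fst p) (Gs br n p)"

lemma Gs_eq: "Gs br n (x, y) = (br x ^^ n) y"
  by (induction n) auto

fun DG :: "('a::real_normed_vector \<Rightarrow> 'a \<Rightarrow> 'a) \<Rightarrow> nat \<Rightarrow> ('a \<times> 'a) list \<Rightarrow> 'a \<times> 'a \<Rightarrow> 'a" where
  "DG br 0 = linD snd"
| "DG br (Suc n) = (\<lambda>vs. LB br (linD fst) (DG br n) (rev vs))"

lemma wit_DG: "bounded_bilinear br \<Longrightarrow> wit (DG br n)"
  by (induction n) (auto intro!: wit_LB wit_lin bounded_linear_fst bounded_linear_snd)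

lemma DG_Nil: "DG br n [] p = Gs br n p"
  by (induction n) auto

lemma linD_bound:
  assumes "bounded_linear l" "\<And>v. norm (l v) \<le> norm v" "norm (l p) \<le> \<rho>" "1 \<le> \<rho>"
  shows "norm (linD l us p) \<le> \<rho> * 1 ^ length us * prod_list (map norm us)"
proof (cases us)
  case Nil then show ?thesis using assms by simp
next
  case (Cons v ws)
  show ?thesis
  proof (cases ws)
    case Nil
    have "norm (l v) \<le> 1 * norm v" using assms(2) by simp
    also have "\<dots> \<le> \<rho> * norm v" using assms(4) by (intro mult_right_mono) auto
    finally show ?thesis using Cons Nil by simp
  next
    case (Cons w ws')
    have "0 \<le> prod_list (map norm us)" by (rule prod_list_nonneg) auto
    then show ?thesis using \<open>us = v # ws\<close> Cons assms(4) by simp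
  qed
qed

lemma DG_bound:
  assumes K: "0 \<le> K" "\<And>a b. norm (br a b) \<le> norm a * norm b * K"
    and p: "norm p \<le> \<rho>" "1 \<le> \<rho>"
  shows "norm (DG br n us p) \<le> K ^ n * \<rho> ^ (n + 1) * (real n + 1) ^ length us * prod_list (map norm us)"
proof (induction n arbitrary: us)
  case 0
  have "norm (linD snd us p) \<le> \<rho> * 1 ^ length us * prod_list (map norm us)"
    by (rule linD_bound[OF bounded_linear_snd _ _ p(2)]) (metis norm_snd_le prod.collapse order_trans p(1))+
  then show ?case by simp
next
  case (Suc n)
  have fb: "norm (linD fst us p) \<le> \<rho> * 1 ^ length us * prod_list (map norm us)" for us
    by (rule linD_bound[OF bounded_linear_fst _ _ p(2)]) (metis norm_fst_le prod.collapse order_trans p(1))+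
  have "norm (LB br (linD fst) (DG br n) (rev us) p)
     \<le> K * \<rho> * (K ^ n * \<rho> ^ (n + 1)) * (1 + (real n + 1)) ^ length (rev us) * prod_list (map norm (rev us))"
    by (rule LB_bound[where Df="linD fst" and A=\<rho> and s=1, OF K fb]) (use Suc.IH in \<open>simp add: ac_simps\<close>)
  then show ?case by (simp add: rev_map[symmetric] algebra_simps)
qed

lemma pow_le_fact_exp:
  assumes "0 \<le> (y::real)" shows "y ^ m \<le> fact m * exp y"
proof -
  have "(\<Sum>n\<in>{m}. y ^ n /\<^sub>R fact n) \<le> (\<Sum>n. y ^ n /\<^sub>R fact n)"
    by (rule sum_le_suminf) (use exp_converges[of y] assms in \<open>auto simp: sums_iff\<close>)
  then have "y ^ m / fact m \<le> exp y" using exp_converges[of y] by (simp add: sums_iff divide_inverse_commute)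
  then show ?thesis by (simp add: field_simps)
qed

lemma summable_M:
  fixes K \<rho> :: real assumes "0 \<le> K" "1 \<le> \<rho>"
  shows "summable (\<lambda>n. 1 / fact n * (K ^ n * \<rho> ^ (n + 1) * (real n + 1) ^ m))"
proof (rule summable_comparison_test'[where N=0])
  let ?c = "fact m * exp 1 * \<rho>"
  show "summable (\<lambda>n. ?c * (inverse (fact n) * (K * \<rho> * exp 1) ^ n))"
    by (intro summable_mult summable_exp)
  fix n :: nat
  have e: "(real n + 1) ^ m \<le> fact m * exp 1 * exp 1 ^ n"
    using pow_le_fact_exp[of "real n + 1" m] by (simp add: exp_add exp_of_nat_mult[symmetric] mult_ac)
  have "0 \<le> K ^ n * \<rho> ^ (n + 1) / fact n" using assms by simp
  then have "K ^ n * \<rho> ^ (n + 1) / fact n * (real n + 1) ^ m \<le> K ^ n * \<rho> ^ (n + 1) / fact n * (fact m * exp 1 * exp 1 ^ n)"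
    by (rule mult_left_mono[OF e])
  then show "norm (1 / fact n * (K ^ n * \<rho> ^ (n + 1) * (real n + 1) ^ m)) \<le> ?c * (inverse (fact n) * (K * \<rho> * exp 1) ^ n)"
    using assms by (simp add: power_mult_distrib field_simps)
qed

definition ExpD :: "('a::real_normed_vector \<Rightarrow> 'a \<Rightarrow> 'a) \<Rightarrow> ('a \<times> 'a) list \<Rightarrow> 'a \<times> 'a \<Rightarrow> 'a" where
  "ExpD br vs p = (\<Sum>n. (1 / fact n) *\<^sub>R DG br n vs p)"

lemma wit_ExpD:
  fixes br :: "'a::banach \<Rightarrow> 'a \<Rightarrow> 'a"
  assumes "bounded_bilinear br" shows "wit (ExpD br)"
proof -
  obtain K where K: "0 \<le> K" "\<And>a b. norm (br a b) \<le> norm a * norm b * K"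
    using bounded_bilinear.nonneg_bounded[OF assms] by blast
  have "wit (\<lambda>vs p. \<Sum>n. (\<lambda>n vs p. (1 / fact n) *\<^sub>R DG br n vs p) n vs p)"
  proof (rule wit_series)
    show "wit (\<lambda>vs p. (1 / fact n) *\<^sub>R DG br n vs p)" for n
      by (rule wit_outer[OF wit_DG[OF assms]]) (rule bounded_linear_scaleR_right)
    fix R :: real and m :: nat
    define \<rho> where "\<rho> = max 1 R"
    have r: "1 \<le> \<rho>" unfolding \<rho>_def by simp
    show "\<exists>M. summable M \<and> (\<forall>n. 0 \<le> M n) \<and>
      (\<forall>n x us. norm x \<le> R \<longrightarrow> length us = m \<longrightarrow> norm ((1 / fact n) *\<^sub>R DG br n us x) \<le> M n * prod_list (map norm us))"
    proof (intro exI conjI allI impI)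
      show "summable (\<lambda>n. 1 / fact n * (K ^ n * \<rho> ^ (n + 1) * (real n + 1) ^ m))"
        by (rule summable_M[OF K(1) r])
      show "0 \<le> 1 / fact n * (K ^ n * \<rho> ^ (n + 1) * (real n + 1) ^ m)" for n
        using K(1) r by simp
      fix n and x :: "'a \<times> 'a" and us :: "('a \<times> 'a) list" assume "norm x \<le> R" "length us = m"
      then have x: "norm x \<le> \<rho>" unfolding \<rho>_def by simp
      have "norm (DG br n us x) \<le> K ^ n * \<rho> ^ (n + 1) * (real n + 1) ^ length us * prod_list (map norm us)"
        by (rule DG_bound[OF K x r])
      then show "norm ((1 / fact n) *\<^sub>R DG br n us x) \<le> 1 / fact n * (K ^ n * \<rho> ^ (n + 1) * (real n + 1) ^ m) * prod_list (map norm us)"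
        using \<open>length us = m\<close> by (simp add: divide_simps mult_ac)
    qed
  qed
  then show ?thesis unfolding ExpD_def by simp
qed

lemma ExpD_Nil: "ExpD br [] (x, y) = exp_ad br x y"
  unfolding ExpD_def exp_ad_def by (simp add: DG_Nil Gs_eq)



lemma pow_Suc_apply: "(f ^^ Suc n) y = f ((f ^^ n) y)" by simp

lemma bl_pow: fixes f :: "'a::real_normed_vector \<Rightarrow> 'a" shows "bounded_linear f \<Longrightarrow> bounded_linear (f ^^ n)"
proof (induction n)
  case 0 show ?case using bounded_linear_ident[folded id_def] by simp
next
  case (Suc n) then show ?case by (simp add: bounded_linear_compose)
qed

lemma leibniz_pow:
  fixes br :: "'a::real_normed_vector \<Rightarrow> 'a \<Rightarrow> 'a"
  assumes bb: "bounded_bilinear br"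
    and der: "\<And>p q. br x (br p q) = br (br x p) q + br p (br x q)"
  shows "(br x ^^ n) (br u v) = (\<Sum>i\<le>n. real (n choose i) *\<^sub>R br ((br x ^^ i) u) ((br x ^^ (n - i)) v))"
proof (induction n)
  case 0 then show ?case by simp
next
  case (Suc n)
  define Q where "Q i j = br ((br x ^^ i) u) ((br x ^^ j) v)" for i j
  have blx: "bounded_linear (br x)" by (rule bounded_bilinear.bounded_linear_right[OF bb])
  have "(br x ^^ Suc n) (br u v) = br x (\<Sum>i\<le>n. real (n choose i) *\<^sub>R Q i (n - i))"
    using Suc.IH by (simp add: Q_def)
  also have "\<dots> = (\<Sum>i\<le>n. real (n choose i) *\<^sub>R (Q (Suc i) (n - i) + Q i (Suc (n - i))))"
    by (simp add: linear_sum[OF bounded_linear.linear[OF blx]] linear_scale[OF bounded_linear.linear[OF blx]] der Q_def)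
  also have "\<dots> = (\<Sum>i\<le>n. real (n choose i) *\<^sub>R Q (Suc i) (n - i)) + (\<Sum>i\<le>n. real (n choose i) *\<^sub>R Q i (Suc (n - i)))"
    by (simp add: scaleR_add_right sum.distrib)
  also have "(\<Sum>i\<le>n. real (n choose i) *\<^sub>R Q i (Suc (n - i))) = (\<Sum>i\<le>n. real (n choose i) *\<^sub>R Q i (Suc n - i))"
    by (intro sum.cong) (auto simp: Suc_diff_le)
  also have "\<dots> = (\<Sum>i\<le>Suc n. real (n choose i) *\<^sub>R Q i (Suc n - i))"
    by simp
  also have "\<dots> = Q 0 (Suc n) + (\<Sum>i\<le>n. real (n choose Suc i) *\<^sub>R Q (Suc i) (n - i))"
    by (subst sum.atMost_Suc_shift) simp
  finally have "(br x ^^ Suc n) (br u v) = Q 0 (Suc n) + ((\<Sum>i\<le>n. real (n choose i) *\<^sub>R Q (Suc i) (n - i)) + (\<Sum>i\<le>n. real (n choose Suc i) *\<^sub>R Q (Suc i) (n - i)))"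
    by (simp add: ac_simps)
  also have "\<dots> = Q 0 (Suc n) + (\<Sum>i\<le>n. real (Suc n choose Suc i) *\<^sub>R Q (Suc i) (n - i))"
    by (simp add: sum.distrib[symmetric] scaleR_add_left[symmetric])
  also have "\<dots> = (\<Sum>i\<le>Suc n. real (Suc n choose i) *\<^sub>R Q i (Suc n - i))"
    by (subst sum.atMost_Suc_shift) simp
  finally show ?case by (simp add: Q_def)
qed



lemma bilinear_Cauchy_sums:
  fixes a :: "nat \<Rightarrow> 'a::banach" and b :: "nat \<Rightarrow> 'b::banach" and pr :: "'a \<Rightarrow> 'b \<Rightarrow> 'c::banach"
  assumes bb: "bounded_bilinear pr"
    and a: "summable (\<lambda>k. norm (a k))"
    and b: "summable (\<lambda>k. norm (b k))"
  shows "(\<lambda>k. \<Sum>i\<le>k. pr (a i) (b (k - i))) sums pr (\<Sum>k. a k) (\<Sum>k. b k)"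
proof -
  obtain K where K: "\<And>x y. norm (pr x y) \<le> norm x * norm y * K" "0 \<le> K"
    using bounded_bilinear.nonneg_bounded[OF bb] by blast
  let ?S1 = "\<lambda>n::nat. {..<n} \<times> {..<n}"
  let ?S2 = "\<lambda>n::nat. {(i,j). i + j < n}"
  have S1_mono: "\<And>m n. m \<le> n \<Longrightarrow> ?S1 m \<subseteq> ?S1 n" by auto
  have S2_le_S1: "\<And>n. ?S2 n \<subseteq> ?S1 n" by auto
  have S1_le_S2: "\<And>n. ?S1 (n div 2) \<subseteq> ?S2 n" by auto
  have finite_S1: "\<And>n. finite (?S1 n)" by simp
  with S2_le_S1 have finite_S2: "\<And>n. finite (?S2 n)" by (rule finite_subset)

  let ?g = "\<lambda>(i,j). pr (a i) (b j)"
  let ?f = "\<lambda>(i,j). norm (a i) * norm (b j) * K"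
  have f_nonneg: "\<And>x. 0 \<le> ?f x" using K(2) by auto
  then have norm_sum_f: "\<And>A. norm (sum ?f A) = sum ?f A"
    unfolding real_norm_def
    by (simp only: abs_of_nonneg sum_nonneg [rule_format])
  have prsum: "pr (\<Sum>k<n. a k) (\<Sum>k<n. b k) = sum ?g (?S1 n)" for n
    unfolding bounded_bilinear.sum_left[OF bb] bounded_bilinear.sum_right[OF bb] by (subst sum.swap) (simp add: sum.cartesian_product)
  have "(\<lambda>n. pr (\<Sum>k<n. a k) (\<Sum>k<n. b k)) \<longlonglongrightarrow> pr (\<Sum>k. a k) (\<Sum>k. b k)"
    by (intro bounded_bilinear.tendsto[OF bb] summable_LIMSEQ summable_norm_cancel [OF a] summable_norm_cancel [OF b])
  then have 1: "(\<lambda>n. sum ?g (?S1 n)) \<longlonglongrightarrow> pr (\<Sum>k. a k) (\<Sum>k. b k)"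
    by (simp only: prsum)
  have fsum: "(\<Sum>k<n. norm (a k)) * (\<Sum>k<n. norm (b k)) * K = sum ?f (?S1 n)" for n
    by (simp add: sum_distrib_left sum_distrib_right sum.cartesian_product[symmetric]) (subst sum.swap, simp)
  have "(\<lambda>n. (\<Sum>k<n. norm (a k)) * (\<Sum>k<n. norm (b k)) * K) \<longlonglongrightarrow> (\<Sum>k. norm (a k)) * (\<Sum>k. norm (b k)) * K"
    using a b by (intro tendsto_mult tendsto_const summable_LIMSEQ)
  then have "(\<lambda>n. sum ?f (?S1 n)) \<longlonglongrightarrow> (\<Sum>k. norm (a k)) * (\<Sum>k. norm (b k)) * K"
    by (simp only: fsum)
  then have "convergent (\<lambda>n. sum ?f (?S1 n))"
    by (rule convergentI)
  then have Cauchy: "Cauchy (\<lambda>n. sum ?f (?S1 n))"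
    by (rule convergent_Cauchy)
  have "Zfun (\<lambda>n. sum ?f (?S1 n - ?S2 n)) sequentially"
  proof (rule ZfunI, simp only: eventually_sequentially norm_sum_f)
    fix r :: real
    assume r: "0 < r"
    from CauchyD [OF Cauchy r] obtain N
      where "\<forall>m\<ge>N. \<forall>n\<ge>N. norm (sum ?f (?S1 m) - sum ?f (?S1 n)) < r" ..
    then have "\<And>m n. N \<le> n \<Longrightarrow> n \<le> m \<Longrightarrow> norm (sum ?f (?S1 m - ?S1 n)) < r"
      by (simp only: sum_diff finite_S1 S1_mono)
    then have N: "\<And>m n. N \<le> n \<Longrightarrow> n \<le> m \<Longrightarrow> sum ?f (?S1 m - ?S1 n) < r"
      by (simp only: norm_sum_f)
    show "\<exists>N. \<forall>n\<ge>N. sum ?f (?S1 n - ?S2 n) < r"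
    proof (intro exI allI impI)
      fix n
      assume "2 * N \<le> n"
      then have n: "N \<le> n div 2" by simp
      have "sum ?f (?S1 n - ?S2 n) \<le> sum ?f (?S1 n - ?S1 (n div 2))"
        by (intro sum_mono2 finite_Diff finite_S1 f_nonneg Diff_mono subset_refl S1_le_S2)
      also have "\<dots> < r"
        using n div_le_dividend by (rule N)
      finally show "sum ?f (?S1 n - ?S2 n) < r" .
    qed
  qed
  then have "Zfun (\<lambda>n. sum ?g (?S1 n - ?S2 n)) sequentially"
    apply (rule Zfun_le [rule_format])
    apply (simp only: norm_sum_f)
    apply (rule order_trans [OF norm_sum sum_mono])
    apply (auto simp add: K(1))
    done
  then have 2: "(\<lambda>n. sum ?g (?S1 n) - sum ?g (?S2 n)) \<longlonglongrightarrow> 0"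
    unfolding tendsto_Zfun_iff diff_0_right
    by (simp only: sum_diff finite_S1 S2_le_S1)
  with 1 have "(\<lambda>n. sum ?g (?S2 n)) \<longlonglongrightarrow> pr (\<Sum>k. a k) (\<Sum>k. b k)"
    by (rule Lim_transform2)
  then show ?thesis
    by (simp only: sums_def sum.triangle_reindex)
qed



locale BB =
  fixes br :: "'a::euclidean_space \<Rightarrow> 'a \<Rightarrow> 'a"
  assumes bb: "bounded_bilinear br"
begin

lemma blr: "bounded_linear (br x)"
  by (rule bounded_bilinear.bounded_linear_right[OF bb])

lemma bl_adpow: "bounded_linear (br x ^^ n)"
  by (rule bl_pow[OF blr])

lemma adpow_zero: "(br x ^^ n) 0 = 0"
  using linear_0[OF bounded_linear.linear[OF bl_adpow]] .

lemma pow_norm: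
  assumes K: "0 \<le> K" "\<And>a b. norm (br a b) \<le> norm a * norm b * K"
  shows "norm ((br x ^^ n) y) \<le> (K * norm x) ^ n * norm y"
proof (induction n)
  case 0 then show ?case by simp
next
  case (Suc n)
  have "norm ((br x ^^ Suc n) y) \<le> norm x * norm ((br x ^^ n) y) * K" using K(2) by simp
  also have "\<dots> \<le> norm x * ((K * norm x) ^ n * norm y) * K"
    using Suc.IH K(1) by (intro mult_right_mono mult_left_mono) auto
  finally show ?case by (simp add: ac_simps)
qed

lemma summable_norm_terms: "summable (\<lambda>n. norm ((1 / fact n) *\<^sub>R (br x ^^ n) y))"
proof -
  obtain K where K: "0 \<le> K" "\<And>a b. norm (br a b) \<le> norm a * norm b * K"
    using bounded_bilinear.nonneg_bounded[OF bb] by blast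
  show ?thesis
  proof (rule summable_comparison_test'[where N=0])
    show "summable (\<lambda>n. norm y * (inverse (fact n) * (K * norm x) ^ n))"
      by (intro summable_mult summable_exp)
    fix n
    have "norm ((br x ^^ n) y) / fact n \<le> (K * norm x) ^ n * norm y / fact n"
      using pow_norm[OF K] by (intro divide_right_mono) auto
    then show "norm (norm ((1 / fact n) *\<^sub>R (br x ^^ n) y)) \<le> norm y * (inverse (fact n) * (K * norm x) ^ n)"
      by (simp add: field_simps)
  qed
qed

lemma summable_terms: "summable (\<lambda>n. (1 / fact n) *\<^sub>R (br x ^^ n) y)"
  by (rule summable_norm_cancel[OF summable_norm_terms])

lemma exp_sums: "(\<lambda>n. (1 / fact n) *\<^sub>R (br x ^^ n) y) sums exp_ad br x y"
  unfolding exp_ad_def by (rule summable_sums[OF summable_terms])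

lemma exp_linear: "linear (exp_ad br x)"
proof (rule linearI)
  fix y1 y2
  have "(\<lambda>n. (1 / fact n) *\<^sub>R (br x ^^ n) y1 + (1 / fact n) *\<^sub>R (br x ^^ n) y2) sums (exp_ad br x y1 + exp_ad br x y2)"
    by (intro sums_add exp_sums)
  moreover have "(\<lambda>n. (1 / fact n) *\<^sub>R (br x ^^ n) y1 + (1 / fact n) *\<^sub>R (br x ^^ n) y2) = (\<lambda>n. (1 / fact n) *\<^sub>R (br x ^^ n) (y1 + y2))"
    by (simp add: linear_add[OF bounded_linear.linear[OF bl_adpow]] scaleR_add_right)
  ultimately show "exp_ad br x (y1 + y2) = exp_ad br x y1 + exp_ad br x y2"
    using exp_sums sums_unique2 by metis
next
  fix c y
  have "(\<lambda>n. c *\<^sub>R ((1 / fact n) *\<^sub>R (br x ^^ n) y)) sums (c *\<^sub>R exp_ad br x y)"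
    by (intro sums_scaleR_right exp_sums)
  moreover have "(\<lambda>n. c *\<^sub>R ((1 / fact n) *\<^sub>R (br x ^^ n) y)) = (\<lambda>n. (1 / fact n) *\<^sub>R (br x ^^ n) (c *\<^sub>R y))"
    by (simp add: linear_scale[OF bounded_linear.linear[OF bl_adpow]])
  ultimately show "exp_ad br x (c *\<^sub>R y) = c *\<^sub>R exp_ad br x y"
    using exp_sums sums_unique2 by metis
qed

lemma exp_bl: "bounded_linear (exp_ad br x)"
  using exp_linear linear_conv_bounded_linear by blast

lemma sums_first: "(\<lambda>n. if n = 0 then y else 0) sums y"
proof -
  have "(\<lambda>n. if n = 0 then y else 0) sums (\<Sum>n\<in>{0::nat}. if n = 0 then y else 0)"
    by (rule sums_finite) auto
  then show ?thesis by simp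
qed

lemma exp_fix: assumes "br x y = 0" shows "exp_ad br x y = y"
proof -
  have "(\<lambda>n. (1 / fact n) *\<^sub>R (br x ^^ n) y) = (\<lambda>n. if n = 0 then y else 0)"
  proof
    fix n show "(1 / fact n) *\<^sub>R (br x ^^ n) y = (if n = 0 then y else 0)"
      using assms adpow_zero by (cases n) (auto simp del: funpow.simps simp: funpow_Suc_right)
  qed
  then show ?thesis using exp_sums[of x y] sums_first sums_unique2 by metis
qed

lemma exp_functional:
  assumes "bounded_linear \<phi>" "\<And>u v. \<phi> (br u v) = 0"
  shows "\<phi> (exp_ad br x y) = \<phi> y"
proof -
  have "(\<lambda>n. \<phi> ((1 / fact n) *\<^sub>R (br x ^^ n) y)) sums \<phi> (exp_ad br x y)"
    by (rule bounded_linear.sums[OF assms(1) exp_sums])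
  moreover have "(\<lambda>n. \<phi> ((1 / fact n) *\<^sub>R (br x ^^ n) y)) = (\<lambda>n. if n = 0 then \<phi> y else 0)"
  proof
    fix n show "\<phi> ((1 / fact n) *\<^sub>R (br x ^^ n) y) = (if n = 0 then \<phi> y else 0)"
      using assms by (cases n) (auto simp: linear_scale[OF bounded_linear.linear[OF assms(1)]])
  qed
  ultimately show ?thesis using sums_first sums_unique2 by metis
qed

lemma exp_aut:
  assumes der: "\<And>p q. br x (br p q) = br (br x p) q + br p (br x q)"
  shows "exp_ad br x (br u v) = br (exp_ad br x u) (exp_ad br x v)"
proof -
  have "(\<lambda>k. \<Sum>i\<le>k. br ((1 / fact i) *\<^sub>R (br x ^^ i) u) ((1 / fact (k - i)) *\<^sub>R (br x ^^ (k - i)) v))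
     sums br (\<Sum>n. (1 / fact n) *\<^sub>R (br x ^^ n) u) (\<Sum>n. (1 / fact n) *\<^sub>R (br x ^^ n) v)"
    by (rule bilinear_Cauchy_sums[OF bb summable_norm_terms summable_norm_terms])
  moreover have "(\<lambda>k. \<Sum>i\<le>k. br ((1 / fact i) *\<^sub>R (br x ^^ i) u) ((1 / fact (k - i)) *\<^sub>R (br x ^^ (k - i)) v))
     = (\<lambda>k. (1 / fact k) *\<^sub>R (br x ^^ k) (br u v))"
  proof
    fix k
    have "(1 / fact k) *\<^sub>R (br x ^^ k) (br u v) = (\<Sum>i\<le>k. (1 / fact k * real (k choose i)) *\<^sub>R br ((br x ^^ i) u) ((br x ^^ (k - i)) v))"
      by (simp add: leibniz_pow[OF bb der] scaleR_sum_right)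
    also have "\<dots> = (\<Sum>i\<le>k. br ((1 / fact i) *\<^sub>R (br x ^^ i) u) ((1 / fact (k - i)) *\<^sub>R (br x ^^ (k - i)) v))"
    proof (rule sum.cong[OF refl])
      fix i assume "i \<in> {..k}"
      then have "1 / fact k * real (k choose i) = 1 / fact i * (1 / fact (k - i))"
        by (simp add: binomial_fact)
      then show "(1 / fact k * real (k choose i)) *\<^sub>R br ((br x ^^ i) u) ((br x ^^ (k - i)) v) =
          br ((1 / fact i) *\<^sub>R (br x ^^ i) u) ((1 / fact (k - i)) *\<^sub>R (br x ^^ (k - i)) v)"
        by (simp add: bounded_bilinear.scaleR_left[OF bb] bounded_bilinear.scaleR_right[OF bb])
    qed
    finally show "(\<Sum>i\<le>k. br ((1 / fact i) *\<^sub>R (br x ^^ i) u) ((1 / fact (k - i)) *\<^sub>R (br x ^^ (k - i)) v))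
      = (1 / fact k) *\<^sub>R (br x ^^ k) (br u v)" by simp
  qed
  ultimately have "(\<lambda>k. (1 / fact k) *\<^sub>R (br x ^^ k) (br u v)) sums br (exp_ad br x u) (exp_ad br x v)"
    by (simp add: exp_ad_def)
  then show ?thesis using exp_sums sums_unique2 by metis
qed

end



context BB begin

lemma exp_key:
  assumes der: "\<And>x p q. br x (br p q) = br (br x p) q + br p (br x q)"
  shows "exp_ad br (exp_ad br x y) (exp_ad br x w) = exp_ad br x (exp_ad br y w)"
proof -
  have pw: "(br (exp_ad br x y) ^^ n) (exp_ad br x w) = exp_ad br x ((br y ^^ n) w)" for n
  proof (induction n)
    case 0 then show ?case by simp
  next
    case (Suc n) then show ?case by (simp add: exp_aut[OF der])
  qed
  have "exp_ad br (exp_ad br x y) (exp_ad br x w) = (\<Sum>n. (1 / fact n) *\<^sub>R exp_ad br x ((br y ^^ n) w))"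
    unfolding exp_ad_def[of br "exp_ad br x y"] pw ..
  also have "\<dots> = (\<Sum>n. exp_ad br x ((1 / fact n) *\<^sub>R (br y ^^ n) w))"
    by (simp add: linear_scale[OF exp_linear])
  also have "\<dots> = exp_ad br x (\<Sum>n. (1 / fact n) *\<^sub>R (br y ^^ n) w)"
    by (rule bounded_linear.suminf[OF exp_bl summable_terms, symmetric])
  finally show ?thesis by (simp add: exp_ad_def[of br y])
qed

lemma neg_pow: "(br (-x) ^^ n) y = (-1) ^ n *\<^sub>R (br x ^^ n) y"
proof (induction n)
  case 0 then show ?case by simp
next
  case (Suc n) then show ?case
    by (simp add: bounded_bilinear.minus_left[OF bb] bounded_bilinear.scaleR_right[OF bb])
qed

lemma exp_inv: "exp_ad br (-x) (exp_ad br x w) = w"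
proof -
  obtain K where K: "0 \<le> K" "\<And>a b. norm (br a b) \<le> norm a * norm b * K"
    using bounded_bilinear.nonneg_bounded[OF bb] by blast
  define A where "A m = Blinfun (br x ^^ m)" for m
  have A: "blinfun_apply (A m) = br x ^^ m" for m
    unfolding A_def by (rule bounded_linear_Blinfun_apply[OF bl_adpow])
  define a where "a m = ((-1) ^ m / fact m) *\<^sub>R A m" for m
  define b where "b n = (1 / fact n) *\<^sub>R (br x ^^ n) w" for n
  have na: "norm (a m) \<le> inverse (fact m) * (K * norm x) ^ m" for m
  proof -
    have "norm (A m) \<le> (K * norm x) ^ m"
      by (rule norm_blinfun_bound) (use K(1) pow_norm[OF K] in \<open>auto simp: A\<close>)
    then show ?thesis unfolding a_def by (simp add: abs_mult power_abs divide_simps)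
  qed
  have sa: "summable (\<lambda>m. norm (a m))"
    by (rule summable_comparison_test'[where N=0, OF summable_exp]) (use na in auto)
  have sb: "summable (\<lambda>n. norm (b n))" unfolding b_def by (rule summable_norm_terms)
  have "(\<lambda>k. \<Sum>i\<le>k. blinfun_apply (a i) (b (k - i))) sums blinfun_apply (\<Sum>k. a k) (\<Sum>k. b k)"
    by (rule bilinear_Cauchy_sums[OF bounded_bilinear_blinfun_apply sa sb])
  moreover have "(\<lambda>k. \<Sum>i\<le>k. blinfun_apply (a i) (b (k - i))) = (\<lambda>k. if k = 0 then w else 0)"
  proof
    fix k
    have "(\<Sum>i\<le>k. blinfun_apply (a i) (b (k - i))) = (\<Sum>i\<le>k. ((-1) ^ i * real (k choose i) / fact k) *\<^sub>R (br x ^^ k) w)"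
    proof (rule sum.cong[OF refl])
      fix i assume i: "i \<in> {..k}"
      have "(br x ^^ i) ((br x ^^ (k - i)) w) = (br x ^^ k) w"
        using i funpow_add[of i "k - i" "br x"] by simp
      moreover have "(-1) ^ i / fact i * (1 / fact (k - i)) = ((-1) ^ i * real (k choose i) / fact k :: real)"
        using i by (simp add: binomial_fact)
      ultimately show "blinfun_apply (a i) (b (k - i)) = ((-1) ^ i * real (k choose i) / fact k) *\<^sub>R (br x ^^ k) w"
        unfolding a_def b_def using linear_scale[OF bounded_linear.linear[OF bl_adpow]]
        by (simp add: A scaleR_blinfun.rep_eq)
    qed
    also have "\<dots> = ((\<Sum>i\<le>k. (-1) ^ i * real (k choose i)) / fact k) *\<^sub>R (br x ^^ k) w"
      by (simp add: scaleR_sum_left[symmetric] sum_divide_distrib)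
    also have "\<dots> = (if k = 0 then w else 0)"
      by (cases "k = 0") (simp_all add: choose_alternating_sum)
    finally show "(\<Sum>i\<le>k. blinfun_apply (a i) (b (k - i))) = (if k = 0 then w else 0)" .
  qed
  ultimately have "blinfun_apply (\<Sum>k. a k) (\<Sum>k. b k) = w"
    using sums_first sums_unique2 by metis
  moreover have "(\<Sum>k. b k) = exp_ad br x w" unfolding b_def exp_ad_def ..
  moreover have "blinfun_apply (\<Sum>k. a k) y = exp_ad br (-x) y" for y
  proof -
    have "blinfun_apply (\<Sum>k. a k) y = (\<Sum>k. blinfun_apply (a k) y)"
      by (rule bounded_linear.suminf[OF bounded_bilinear.bounded_linear_left[OF bounded_bilinear_blinfun_apply]
            summable_norm_cancel[OF sa]])
    also have "\<dots> = exp_ad br (-x) y"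
      unfolding exp_ad_def neg_pow a_def by (simp add: A scaleR_blinfun.rep_eq)
    finally show ?thesis .
  qed
  ultimately show ?thesis by simp
qed

end



lemma smooth_wit: "smooth f \<Longrightarrow> \<exists>D. wit D \<and> (\<forall>x. D [] x = f x)"
  unfolding smooth_def wit_def by blast

lemma smooth_add: assumes "smooth g" "smooth h" shows "smooth (\<lambda>x. g x + h x)"
proof -
  obtain Dg where g: "wit Dg" "\<And>x. Dg [] x = g x" using smooth_wit[OF assms(1)] by blast
  obtain Dh where h: "wit Dh" "\<And>x. Dh [] x = h x" using smooth_wit[OF assms(2)] by blast
  show ?thesis by (rule smoothI[OF wit_add[OF g(1) h(1)]]) (simp add: g h)
qed

lemma smooth_zero: "smooth (\<lambda>x::'a::real_normed_vector. 0::'b::real_normed_vector)"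
  by (rule smooth_lin) (rule bounded_linear_zero)

lemma smooth_sum_lessThan: fixes k :: nat shows "(\<And>j. j < k \<Longrightarrow> smooth (g j)) \<Longrightarrow> smooth (\<lambda>x. \<Sum>j<k. g j x)"
proof (induction k)
  case 0 then show ?case using smooth_zero by simp
next
  case (Suc k)
  have "smooth (\<lambda>x. (\<Sum>j<k. g j x) + g k x)"
    by (rule smooth_add) (use Suc in auto)
  then show ?case by simp
qed

lemma smooth_outer: assumes "smooth g" "bounded_linear l" shows "smooth (\<lambda>x. l (g x))"
proof -
  obtain Dg where g: "wit Dg" "\<And>x. Dg [] x = g x" using smooth_wit[OF assms(1)] by blast
  show ?thesis by (rule smoothI[OF wit_outer[OF g(1) assms(2)]]) (simp add: g)
qed

lemma smooth_inner: assumes "smooth g" "bounded_linear l" shows "smooth (\<lambda>x. g (l x))"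
proof -
  obtain Dg where g: "wit Dg" "\<And>x. Dg [] x = g x" using smooth_wit[OF assms(1)] by blast
  show ?thesis by (rule smoothI[OF wit_inner[OF g(1) assms(2)]]) (simp add: g)
qed

lemma smooth_bilin: assumes "bounded_bilinear pr" "smooth g" "smooth h" shows "smooth (\<lambda>x. pr (g x) (h x))"
proof -
  obtain Dg where g: "wit Dg" "\<And>x. Dg [] x = g x" using smooth_wit[OF assms(2)] by blast
  obtain Dh where h: "wit Dh" "\<And>x. Dh [] x = h x" using smooth_wit[OF assms(3)] by blast
  show ?thesis by (rule smoothI[OF wit_LB[OF assms(1) g(1) h(1)]]) (simp add: g h)
qed

lemma smooth_exp:
  fixes br :: "'a::banach \<Rightarrow> 'a \<Rightarrow> 'a"
  assumes "bounded_bilinear br" shows "smooth (\<lambda>p. exp_ad br (fst p) (snd p))"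
proof (rule smoothI[OF wit_ExpD[OF assms]])
  fix p :: "'a \<times> 'a" show "ExpD br [] p = exp_ad br (fst p) (snd p)" by (cases p) (simp add: ExpD_Nil)
qed

lemma smooth_differentiable: assumes "smooth g" shows "g differentiable (at x)"
proof -
  obtain D where D: "wit D" "\<And>x. D [] x = g x" using smooth_wit[OF assms] by blast
  have "D [] = g" using D(2) by (rule ext)
  then have "(g has_derivative (\<lambda>v. D [v] x)) (at x)" using D(1) unfolding wit_def by metis
  then show ?thesis by (rule differentiableI)
qed

lemma Gs_zero: "bounded_bilinear br \<Longrightarrow> Gs br n (0, v) = (if n = 0 then v else 0)"
  by (induction n) (auto simp: bounded_bilinear.zero_left bounded_bilinear.zero_right)

lemma DG_one: "bounded_bilinear br \<Longrightarrow> DG br n [(h, 0)] (0, v) = (if n = 1 then br h v else 0)"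
proof (cases n)
  case 0 then show ?thesis by simp
next
  case (Suc m)
  assume bb: "bounded_bilinear br"
  have "DG br n [(h, 0)] (0, v) = br h (Gs br m (0, v))"
    using Suc by (simp add: DG_Nil bounded_bilinear.zero_left[OF bb])
  then show ?thesis using Suc by (simp add: Gs_zero[OF bb] bounded_bilinear.zero_right[OF bb])
qed

lemma exp_deriv0:
  fixes br :: "'a::banach \<Rightarrow> 'a \<Rightarrow> 'a"
  assumes bb: "bounded_bilinear br"
  shows "((\<lambda>x. exp_ad br x v) has_derivative (\<lambda>h. br h v)) (at 0)"
proof -
  have w: "(ExpD br [] has_derivative (\<lambda>w. ExpD br [w] (0, v))) (at (0, v))"
    using wit_ExpD[OF bb] unfolding wit_def by blast
  have p: "((\<lambda>x. (x, v)) has_derivative (\<lambda>h. (h, 0))) (at (0::'a))"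
    by (auto intro!: derivative_eq_intros)
  have "((ExpD br [] \<circ> (\<lambda>x. (x, v))) has_derivative ((\<lambda>w. ExpD br [w] (0, v)) \<circ> (\<lambda>h. (h, 0)))) (at 0)"
    by (rule diff_chain_at[OF p]) (use w in simp)
  moreover have "ExpD br [(h, 0)] (0, v) = br h v" for h
  proof -
    have "(\<lambda>n. (1 / fact n) *\<^sub>R DG br n [(h, 0)] (0, v)) = (\<lambda>n. if n = 1 then (1 / fact n) *\<^sub>R br h v else 0)"
      by (auto simp: DG_one[OF bb])
    then show ?thesis unfolding ExpD_def using sums_single[of 1 "\<lambda>n. (1 / fact n) *\<^sub>R br h v"]
      by (simp add: sums_iff)
  qed
  ultimately show ?thesis by (simp add: o_def ExpD_Nil)
qed



theorem proposition3:
  fixes br :: "'a::euclidean_space \<Rightarrow> 'a \<Rightarrow> 'a"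
    and sp :: "'a \<Rightarrow> 'a \<Rightarrow> real"
    and k :: nat
    and a b z :: "nat \<Rightarrow> 'a"
    and f :: "nat \<Rightarrow> real \<Rightarrow> real"
  assumes "left_leibniz br"
    and "scalar_product sp"
    and "\<forall>j<k. a j \<in> orth sp (derived br) \<inter> orth sp (center br)"
    and "\<forall>j<k. b j \<in> orth sp (derived br) \<inter> orth sp (center br)"
    and "\<forall>j<k. z j \<in> center br"
    and "\<forall>j<k. smooth (f j) \<and> f j 0 = 0"
  shows "linear_lie_rack
           (\<lambda>x y. exp_ad br x y + (\<Sum>j<k. (sp y (b j) * f j (sp x (a j))) *\<^sub>R z j))
         \<and> ((\<forall>j<k. deriv (f j) 0 = 0) \<longrightarrow>
            is_rack_bracket
              (\<lambda>x y. exp_ad br x y + (\<Sum>j<k. (sp y (b j) * f j (sp x (a j))) *\<^sub>R z j)) br)"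
proof -
  have bbr: "bounded_bilinear br"
    using assms(1) bilinear_conv_bounded_bilinear unfolding left_leibniz_def by blast
  interpret BB br by (rule BB.intro[OF bbr])
  have der: "\<And>x p q. br x (br p q) = br (br x p) q + br p (br x q)"
    using assms(1) unfolding left_leibniz_def by blast
  have bsp: "bounded_bilinear sp"
    using assms(2) bilinear_conv_bounded_bilinear unfolding scalar_product_def by blast
  have sym: "\<And>x y. sp x y = sp y x" using assms(2) unfolding scalar_product_def by blast
  have spl: "bounded_linear (\<lambda>y. sp y c)" for c
    by (rule bounded_bilinear.bounded_linear_left[OF bsp])
  have zc: "br h (z j) = 0" "br (z j) h = 0" if "j < k" for j h
    using assms(5) that unfolding center_def by auto
  have brd: "br u v \<in> derived br" for u v
    unfolding derived_def by (rule span_base) blast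
  have a_der: "sp (br u v) (a j) = 0" if "j < k" for u v j
  proof -
    have "sp (a j) (br u v) = 0" using assms(3) that brd[of u v] unfolding orth_def by blast
    then show ?thesis by (simp add: sym)
  qed
  have b_der: "sp (br u v) (b j) = 0" if "j < k" for u v j
  proof -
    have "sp (b j) (br u v) = 0" using assms(4) that brd[of u v] unfolding orth_def by blast
    then show ?thesis by (simp add: sym)
  qed
  have a_cen: "sp (z i) (a j) = 0" if "j < k" "i < k" for i j
  proof -
    have "sp (a j) (z i) = 0" using assms(3,5) that unfolding orth_def by blast
    then show ?thesis by (simp add: sym)
  qed
  have b_cen: "sp (z i) (b j) = 0" if "j < k" "i < k" for i j
  proof -
    have "sp (b j) (z i) = 0" using assms(4,5) that unfolding orth_def by blast
    then show ?thesis by (simp add: sym)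
  qed
  have f0: "f j 0 = 0" if "j < k" for j using assms(6) that by blast

  define E where "E = exp_ad br"
  define N where "N x w = (\<Sum>j<k. (sp w (b j) * f j (sp x (a j))) *\<^sub>R z j)" for x w
  define L where "L x w = E x w + N x w" for x w
  define M where "M x w = E (-x) w - N x w" for x w

  have N_sp: "sp (N x w) c = 0" if "\<And>i. i < k \<Longrightarrow> sp (z i) c = 0" for x w c
    unfolding N_def using that
    by (simp add: bounded_bilinear.sum_left[OF bsp] bounded_bilinear.scaleR_left[OF bsp])
  have E_sp: "sp (E x y) c = sp y c" if "\<And>u v. sp (br u v) c = 0" for x y c
    unfolding E_def by (rule exp_functional[OF spl that])
  have L_sp_a: "sp (L x y) (a j) = sp y (a j)" if "j < k" for x y j
    unfolding L_def using that
    by (simp add: bounded_bilinear.add_left[OF bsp] E_sp a_der N_sp a_cen)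
  have L_sp_b: "sp (L x y) (b j) = sp y (b j)" if "j < k" for x y j
    unfolding L_def using that
    by (simp add: bounded_bilinear.add_left[OF bsp] E_sp b_der N_sp b_cen)
  have M_sp_b: "sp (M x y) (b j) = sp y (b j)" if "j < k" for x y j
    unfolding M_def using that
    by (simp add: bounded_bilinear.diff_left[OF bsp] E_sp b_der N_sp b_cen)
  have N_dep: "N x w = N x' w'" if "\<And>j. j < k \<Longrightarrow> sp w (b j) = sp w' (b j)"
     "\<And>j. j < k \<Longrightarrow> sp x (a j) = sp x' (a j)" for x x' w w'
    unfolding N_def using that by (intro sum.cong) auto
  have E_N: "E x (N y w) = N y w" for x y w
  proof -
    have "E x (N y w) = (\<Sum>j<k. (sp w (b j) * f j (sp y (a j))) *\<^sub>R E x (z j))"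
      unfolding N_def by (simp add: linear_sum[OF exp_linear[of x]] linear_scale[OF exp_linear[of x]] E_def)
    also have "\<dots> = N y w"
      unfolding N_def E_def by (intro sum.cong refl) (simp add: exp_fix zc)
    finally show ?thesis .
  qed
  have brN: "br (N x y) w = 0" for x y w
    unfolding N_def by (simp add: bounded_bilinear.sum_left[OF bbr] bounded_bilinear.scaleR_left[OF bbr] zc)
  have br_L: "br (L x y) = br (E x y)" for x y
    by (rule ext) (simp add: L_def bounded_bilinear.add_left[OF bbr] brN)
  have E_L: "E (L x y) = E (E x y)" for x y
  proof
    fix w show "E (L x y) w = E (E x y) w"
      by (subst (1 2) E_def, simp only: exp_ad_def br_L)
  qed
  have E_add: "E x (p + q) = E x p + E x q" for x p q
    unfolding E_def by (rule linear_add[OF exp_linear])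
  have E_diff: "E x (p - q) = E x p - E x q" for x p q
    unfolding E_def by (rule linear_diff[OF exp_linear])
  have E_inv1: "E (-x) (E x w) = w" for x w unfolding E_def by (rule exp_inv)
  have E_inv2: "E x (E (-x) w) = w" for x w using exp_inv[of "-x" w] by (simp add: E_def)

  have rack_id: "L x (L y w) = L (L x y) (L x w)" for x y w
  proof -
    have "L x (L y w) = E x (E y w) + N y w + N x w"
    proof -
      have "N x (L y w) = N x w" by (rule N_dep) (simp_all add: L_sp_b)
      then show ?thesis by (simp add: L_def[of x] L_def[of y] E_add E_N)
    qed
    moreover have "L (L x y) (L x w) = E x (E y w) + N x w + N y w"
    proof -
      have "N (L x y) (L x w) = N y w" by (rule N_dep) (simp_all add: L_sp_b L_sp_a)
      moreover have "E (E x y) (E x w) = E x (E y w)" unfolding E_def by (rule exp_key[OF der])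
      ultimately show ?thesis by (simp add: L_def[of "L x y"] L_def[of x w] E_L E_add E_N)
    qed
    ultimately show ?thesis by (simp add: ac_simps)
  qed

  have N_lin: "linear (N x)" for x
  proof -
    have "linear (\<lambda>w. \<Sum>j<k. (sp w (b j) * f j (sp x (a j))) *\<^sub>R z j)"
    proof (rule linear_compose_sum, intro ballI)
      fix j
      show "linear (\<lambda>w. (sp w (b j) * f j (sp x (a j))) *\<^sub>R z j)"
        by (rule linearI) (simp_all add: bounded_bilinear.add_left[OF bsp] bounded_bilinear.scaleR_left[OF bsp]
              distrib_right scaleR_add_left)
    qed
    then show ?thesis unfolding N_def[abs_def] by simp
  qed
  have L_lin: "linear (L x)" for x
  proof -
    have "linear (\<lambda>w. E x w + N x w)"
      by (rule linear_compose_add) (use exp_linear N_lin in \<open>simp_all add: E_def\<close>)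
    then show ?thesis unfolding L_def[abs_def] by simp
  qed
  have M_lin: "linear (M x)" for x
  proof -
    have "linear (\<lambda>w. E (-x) w - N x w)"
      by (rule linear_compose_sub) (use exp_linear N_lin in \<open>simp_all add: E_def\<close>)
    then show ?thesis unfolding M_def[abs_def] by simp
  qed
  have invr: "L x (M x w) = w" for x w
  proof -
    have "N x (M x w) = N x w" by (rule N_dep) (simp_all add: M_sp_b)
    then show ?thesis by (simp add: L_def M_def E_diff E_N E_inv2)
  qed
  have invl: "M x (L x w) = w" for x w
  proof -
    have "N x (L x w) = N x w" by (rule N_dep) (simp_all add: L_sp_b)
    then show ?thesis by (simp add: L_def M_def E_add E_N E_inv1)
  qed
  have bijL: "bij (L x)" for x
    by (rule o_bij[of "M x"]) (auto simp: invr invl)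
  have invL: "inv (L x) = M x" for x
    by (rule inv_unique_comp) (auto simp: invr invl)

  have sm_all: "smooth (\<lambda>p. L (fst p) (snd p))"
  proof -
    have "smooth (\<lambda>p. exp_ad br (fst p) (snd p) + (\<Sum>j<k. (sp (snd p) (b j) * f j (sp (fst p) (a j))) *\<^sub>R z j))"
    proof (rule smooth_add[OF smooth_exp[OF bbr]], rule smooth_sum_lessThan)
      fix j assume j: "j < k"
      have s1: "smooth (\<lambda>p::'a \<times> 'a. sp (snd p) (b j))"
        by (rule smooth_lin, rule bounded_linear_compose[OF spl bounded_linear_snd])
      have s2: "smooth (\<lambda>p::'a \<times> 'a. f j (sp (fst p) (a j)))"
        by (rule smooth_inner[where g="f j"]) (use assms(6) j in blast, rule bounded_linear_compose[OF spl bounded_linear_fst])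
      have "smooth (\<lambda>p::'a \<times> 'a. sp (snd p) (b j) * f j (sp (fst p) (a j)))"
        by (rule smooth_bilin[OF bounded_bilinear_mult s1 s2])
      then show "smooth (\<lambda>p::'a \<times> 'a. (sp (snd p) (b j) * f j (sp (fst p) (a j))) *\<^sub>R z j)"
        by (rule smooth_outer[where l="\<lambda>r. r *\<^sub>R z j"]) (rule bounded_linear_scaleR_left)
    qed
    then show ?thesis by (simp add: L_def N_def E_def)
  qed
  have sm_L: "smooth (L x)" for x
    by (rule smooth_lin) (use L_lin linear_conv_bounded_linear in blast)
  have sm_M: "smooth (M x)" for x
    by (rule smooth_lin) (use M_lin linear_conv_bounded_linear in blast)

  have pt1: "L x 0 = 0" for x
    by (simp add: L_def N_def E_def linear_0[OF exp_linear] bounded_bilinear.zero_left[OF bsp])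
  have pt2: "L 0 = id"
  proof
    fix y
    have "N 0 y = 0" unfolding N_def
      by (intro sum.neutral ballI) (simp add: bounded_bilinear.zero_left[OF bsp] f0)
    moreover have "E 0 y = y" unfolding E_def by (rule exp_fix) (simp add: bounded_bilinear.zero_left[OF bbr])
    ultimately show "L 0 y = id y" by (simp add: L_def)
  qed

  have part1: "linear_lie_rack L"
    unfolding linear_lie_rack_def lie_rack_def rack_def pointed_at_def
    using bijL rack_id sm_all sm_L sm_M invL pt1 pt2 L_lin by auto

  have part2: "is_rack_bracket L br" if d0: "\<forall>j<k. deriv (f j) 0 = 0"
    unfolding is_rack_bracket_def
  proof (intro allI impI)
    fix u v and c :: "real \<Rightarrow> 'a"
    assume "smooth c \<and> c 0 = 0 \<and> (c has_vector_derivative u) (at 0)"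
    then have c0: "c 0 = 0" and cd: "(c has_derivative (\<lambda>t. t *\<^sub>R u)) (at 0)"
      by (auto simp: has_vector_derivative_def)
    have e0: "((\<lambda>x. exp_ad br x v) has_derivative (\<lambda>h. br h v)) (at (c 0))"
      using exp_deriv0[OF bbr] c0 by simp
    have h1: "((\<lambda>t. E (c t) v) has_derivative (\<lambda>t. t *\<^sub>R br u v)) (at 0)"
      using diff_chain_at[OF cd e0]
      by (simp add: o_def E_def bounded_bilinear.scaleR_left[OF bbr])
    have h2: "((\<lambda>t. (sp v (b j) * f j (sp (c t) (a j))) *\<^sub>R z j) has_derivative (\<lambda>t. 0)) (at 0)"
      if j: "j < k" for j
    proof -
      have g: "((\<lambda>t. sp (c t) (a j)) has_derivative (\<lambda>t. sp (t *\<^sub>R u) (a j))) (at 0)"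
        by (rule bounded_linear.has_derivative[OF spl cd])
      have "f j differentiable (at (sp (c 0) (a j)))"
        using assms(6) j smooth_differentiable by blast
      then have "DERIV (f j) (sp (c 0) (a j)) :> deriv (f j) (sp (c 0) (a j))"
        using DERIV_deriv_iff_real_differentiable by blast
      then have fd0: "(f j has_derivative (*) 0) (at (sp (c 0) (a j)))"
        using d0 j c0 by (simp add: has_field_derivative_def bounded_bilinear.zero_left[OF bsp])
      have fd: "(f j has_derivative (\<lambda>h. 0)) (at (sp (c 0) (a j)))"
        by (rule has_derivative_eq_rhs[OF fd0]) auto
      have "((\<lambda>t. f j (sp (c t) (a j))) has_derivative (\<lambda>t. 0)) (at 0)"
        using diff_chain_at[OF g fd] by (simp add: o_def)
      moreover have "bounded_linear (\<lambda>r. (sp v (b j) * r) *\<^sub>R z j)"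
        by (rule bounded_linear_compose[OF bounded_linear_scaleR_left bounded_linear_mult_right])
      ultimately show ?thesis
        using bounded_linear.has_derivative by fastforce
    qed
    have h3: "((\<lambda>t. N (c t) v) has_derivative (\<lambda>t. 0)) (at 0)"
      unfolding N_def using has_derivative_sum[of "{..<k}", OF h2] by simp
    have "((\<lambda>t. L (c t) v) has_derivative (\<lambda>t. t *\<^sub>R br u v + 0)) (at 0)"
      unfolding L_def by (rule has_derivative_add[OF h1 h3])
    then show "((\<lambda>t. L (c t) v) has_vector_derivative br u v) (at 0)"
      by (simp add: has_vector_derivative_def)
  qed

  have "linear_lie_rack L \<and> ((\<forall>j<k. deriv (f j) 0 = 0) \<longrightarrow> is_rack_bracket L br)"
    using part1 part2 by blast
  moreover have "L = (\<lambda>x y. exp_ad br x y + (\<Sum>j<k. (sp y (b j) * f j (sp x (a j))) *\<^sub>R z j))"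
    by (simp add: L_def[abs_def] N_def E_def)
  ultimately show ?thesis by simp
qed


end
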